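(* Let $X$ be a linearly ordered set (of arbitrary cardinality) and let $k,n\geq 3$ be odd natural numbers. Then $\mathrm{med}_k\in\langle\{\mathrm{med}_n\}\rangle$. Equivalently, every clone on $X$ contains either no median function or all median functions $\mathrm{med}_m$, $m\ge 3$ odd.
   Context: For a set $X$, $\mathscr O^{(n)}$ denotes the set of all $n$-ary functions $X^n\to X$ and $\mathscr O=\bigcup_{n\ge1}\mathscr O^{(n)}$. A clone on $X$ is a subset of $\mathscr O$ containing all projections and closed under composition. For $\mathscr F\subseteq\mathscr O$, $\langle\mathscr F\rangle$ is the smallest clone containing $\mathscr F$. Let $X$ be linearly ordered by $<$. For $n\ge1$ and $1\le k\le n$, $m^n_k(x_1,\dots,x_n)=x_{j_k}$ where $x_{j_1}\le\dots\le x_{j_n}$ (i.e. $m^n_k$ returns the $k$-th smallest entry). For odd $n$, the $n$-th median function is $\mathrm{med}_n=m^n_{(n+1)/2}$. *)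

theory Defs
  imports Main
begin

text \<open>An n-ary operation on the carrier type 'a is represented as a pair (n, f)
with f :: (nat => 'a) => 'a, where the tuple (x_1,...,x_n) is x 0, ..., x (n-1).\<close>

type_synonym 'a op = "nat \<times> ((nat \<Rightarrow> 'a) \<Rightarrow> 'a)"

definition kth_smallest :: "nat \<Rightarrow> nat \<Rightarrow> (nat \<Rightarrow> 'a::linorder) \<Rightarrow> 'a" where
  "kth_smallest n k x = sort (map x [0..<n]) ! (k - 1)"

definition med :: "nat \<Rightarrow> (nat \<Rightarrow> 'a::linorder) \<Rightarrow> 'a" where
  "med n = kth_smallest n ((n + 1) div 2)"

inductive_set clone_gen :: "'a op set \<Rightarrow> 'a op set" for F :: "'a op set" where
  base: "(n, f) \<in> F \<Longrightarrow> (n, f) \<in> clone_gen F"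
| proj: "i < n \<Longrightarrow> (n, \<lambda>x. x i) \<in> clone_gen F"
| comp: "(m, f) \<in> clone_gen F \<Longrightarrow> (\<forall>j<m. (n, g j) \<in> clone_gen F)
          \<Longrightarrow> (n, \<lambda>x. f (\<lambda>j. g j x)) \<in> clone_gen F"

end

theory Submission
  imports Defs
begin

lemma eq_thr:
  fixes a b :: "'a::linorder"
  assumes "\<And>t. t \<le> a \<longleftrightarrow> t \<le> b"
  shows "a = b"
  using assms by (metis order_antisym order_refl)

lemma sorted_thr:
  fixes s :: "'a::linorder list"
  assumes "sorted s" "j < length s"
  shows "t \<le> s ! j \<longleftrightarrow> length s - j \<le> card {i. i < length s \<and> t \<le> s ! i}"
proof
  assume h: "t \<le> s ! j"
  have "{j..<length s} \<subseteq> {i. i < length s \<and> t \<le> s ! i}"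
  proof
    fix i assume "i \<in> {j..<length s}"
    then have "j \<le> i" "i < length s" by auto
    then have "s ! j \<le> s ! i" using assms(1) by (simp add: sorted_nth_mono)
    then show "i \<in> {i. i < length s \<and> t \<le> s ! i}" using h \<open>i < length s\<close> by auto
  qed
  then have "card {j..<length s} \<le> card {i. i < length s \<and> t \<le> s ! i}"
    by (intro card_mono) auto
  then show "length s - j \<le> card {i. i < length s \<and> t \<le> s ! i}" by simp
next
  assume h: "length s - j \<le> card {i. i < length s \<and> t \<le> s ! i}"
  show "t \<le> s ! j"
  proof (rule ccontr)
    assume n: "\<not> t \<le> s ! j"
    have "{i. i < length s \<and> t \<le> s ! i} \<subseteq> {Suc j..<length s}"
    proof
      fix i assume "i \<in> {i. i < length s \<and> t \<le> s ! i}"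
      then have i: "i < length s" "t \<le> s ! i" by auto
      have "Suc j \<le> i"
      proof (rule ccontr)
        assume "\<not> Suc j \<le> i"
        then have "i \<le> j" by simp
        then have "s ! i \<le> s ! j" using assms by (simp add: sorted_nth_mono)
        then show False using n i by auto
      qed
      then show "i \<in> {Suc j..<length s}" using i by auto
    qed
    then have "card {i. i < length s \<and> t \<le> s ! i} \<le> card {Suc j..<length s}"
      by (intro card_mono) auto
    then show False using h assms(2) by simp
  qed
qed

lemma med_thr:
  fixes x :: "nat \<Rightarrow> 'a::linorder"
  assumes "odd K"
  shows "t \<le> med K x \<longleftrightarrow> K < 2 * card {i. i < K \<and> t \<le> x i}"
proof -
  define s where "s = sort (map x [0..<K])"
  have ls: "length s = K" by (simp add: s_def)
  obtain a where a: "K = 2 * a + 1" using assms oddE by blast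
  have j: "(K + 1) div 2 - 1 = a" using a by simp
  have "card {i. i < length s \<and> t \<le> s ! i} = length (filter ((\<le>) t) s)"
    by (simp add: length_filter_conv_card)
  also have "\<dots> = length (filter ((\<le>) t) (map x [0..<K]))"
    by (simp add: s_def filter_sort)
  also have "\<dots> = card {i. i < K \<and> t \<le> x i}"
    by (simp add: length_filter_conv_card) (intro arg_cong[where f=card], auto)
  finally have c: "card {i. i < length s \<and> t \<le> s ! i} = card {i. i < K \<and> t \<le> x i}" .
  have "t \<le> med K x \<longleftrightarrow> t \<le> s ! a"
    by (simp add: med_def kth_smallest_def s_def a)
  also have "\<dots> \<longleftrightarrow> length s - a \<le> card {i. i < length s \<and> t \<le> s ! i}"
    using sorted_thr[of s a t] ls a by (simp add: s_def)
  also have "\<dots> \<longleftrightarrow> K < 2 * card {i. i < K \<and> t \<le> x i}"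
    using c ls a by auto
  finally show ?thesis .
qed

lemma card_split:
  "card {i. i < K \<and> P i} + card {i. i < K \<and> \<not> P i} = (K::nat)"
proof -
  have "{i. i < K \<and> P i} \<union> {i. i < K \<and> \<not> P i} = {..<K}" by auto
  moreover have "card ({i. i < K \<and> P i} \<union> {i. i < K \<and> \<not> P i})
     = card {i. i < K \<and> P i} + card {i. i < K \<and> \<not> P i}"
    by (intro card_Un_disjoint) auto
  ultimately show ?thesis by simp
qed

lemma card_mono_pred:
  assumes "\<And>i. i < K \<Longrightarrow> Q i \<Longrightarrow> Q' i"
  shows "card {i. i < (K::nat) \<and> Q i} \<le> card {i. i < K \<and> Q' i}"
  using assms by (intro card_mono) auto

lemma maj:
  fixes x :: "nat \<Rightarrow> 'a::linorder"
  assumes "odd K" "K < 2 * card {i. i < K \<and> \<sigma> i = v}"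
  shows "med K (\<lambda>i. x (\<sigma> i)) = x v"
proof (rule eq_thr)
  fix t
  show "t \<le> med K (\<lambda>i. x (\<sigma> i)) \<longleftrightarrow> t \<le> x v"
  proof (cases "t \<le> x v")
    case True
    have "card {i. i < K \<and> \<sigma> i = v} \<le> card {i. i < K \<and> t \<le> x (\<sigma> i)}"
      using True by (intro card_mono_pred) auto
    then show ?thesis using True med_thr[OF assms(1), of t "\<lambda>i. x (\<sigma> i)"] assms(2) by auto
  next
    case False
    have "card {i. i < K \<and> t \<le> x (\<sigma> i)} \<le> card {i. i < K \<and> \<not> \<sigma> i = v}"
      using False by (intro card_mono_pred) auto
    moreover have "card {i. i < K \<and> \<sigma> i = v} + card {i. i < K \<and> \<not> \<sigma> i = v} = K"
      by (rule card_split)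
    ultimately show ?thesis using False med_thr[OF assms(1), of t "\<lambda>i. x (\<sigma> i)"] assms(2) by auto
  qed
qed

definition rep :: "nat \<Rightarrow> nat \<Rightarrow> nat \<Rightarrow> nat" where
  "rep a b j = (if j = a then b else j)"

lemma rep_eq: "P a = P b \<Longrightarrow> card {i. i < (K::nat) \<and> P (rep a b (\<sigma> i))} = card {i. i < K \<and> P (\<sigma> i)}"
  by (rule arg_cong[where f=card]) (auto simp: rep_def)

lemma rep_le: "P a \<Longrightarrow> \<not> P b \<Longrightarrow> card {i. i < (K::nat) \<and> P (rep a b (\<sigma> i))} \<le> card {i. i < K \<and> P (\<sigma> i)}"
  apply (rule card_mono) apply (rule finite_subset[of _ "{..<K}"], blast, simp) by (auto simp: rep_def split: if_splits)

lemma rep_ge: "\<not> P a \<Longrightarrow> P b \<Longrightarrow> card {i. i < (K::nat) \<and> P (\<sigma> i)} \<le> card {i. i < K \<and> P (rep a b (\<sigma> i))}"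
  apply (rule card_mono) apply (rule finite_subset[of _ "{..<K}"], blast, simp) by (auto simp: rep_def split: if_splits)

lemma card_Suc_pred: "card {i. i < Suc n \<and> Q i} = card {i. i < n \<and> Q i} + (if Q n then 1 else 0)"
proof (cases "Q n")
  case True
  then have "{i. i < Suc n \<and> Q i} = insert n {i. i < n \<and> Q i}" by (auto simp: less_Suc_eq)
  then show ?thesis using True by simp
next
  case False
  then have "{i. i < Suc n \<and> Q i} = {i. i < n \<and> Q i}" by (auto simp: less_Suc_eq)
  then show ?thesis using False by simp
qed
lemma card3: "card {i. i < (3::nat) \<and> Q i} = (if Q 0 then 1 else 0) + (if Q 1 then 1 else 0) + (if Q 2 then 1 else (0::nat))"
  by (simp only: numeral_3_eq_3 card_Suc_pred) (simp add: numeral_2_eq_2)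

lemma main_lemma:
  fixes F :: "'a::linorder op set"
  assumes oK: "odd K"
    and m3: "\<And>G r. (\<forall>j<3. (r, G j) \<in> clone_gen F) \<Longrightarrow> (r, \<lambda>x. med 3 (\<lambda>j. G j x)) \<in> clone_gen F"
  shows "(\<forall>i<K. \<sigma> i < r) \<Longrightarrow> (r, \<lambda>x. med K (\<lambda>i. x (\<sigma> i))) \<in> clone_gen F"
proof (induction "card (\<sigma> ` {..<K})" arbitrary: \<sigma> rule: less_induct)
  case less
  have K0: "0 < K" using oK by (cases K) auto
  show ?case
  proof (cases "\<exists>ia ib ic. ia < K \<and> ib < K \<and> ic < K \<and> \<sigma> ia \<noteq> \<sigma> ib \<and> \<sigma> ib \<noteq> \<sigma> ic \<and> \<sigma> ia \<noteq> \<sigma> ic")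
    case True
    then obtain ia ib ic where ii: "ia < K" "ib < K" "ic < K" "\<sigma> ia \<noteq> \<sigma> ib" "\<sigma> ib \<noteq> \<sigma> ic" "\<sigma> ia \<noteq> \<sigma> ic"
      by blast
    define a where "a = \<sigma> ia"
    define b where "b = \<sigma> ib"
    define c where "c = \<sigma> ic"
    have abc: "a \<noteq> b" "b \<noteq> c" "a \<noteq> c" using ii by (auto simp: a_def b_def c_def)
    have inI: "a \<in> \<sigma> ` {..<K}" "b \<in> \<sigma> ` {..<K}" "c \<in> \<sigma> ` {..<K}"
      using ii by (auto simp: a_def b_def c_def)
    have red: "card ((\<lambda>i. rep u v (\<sigma> i)) ` {..<K}) < card (\<sigma> ` {..<K})"
      if "u \<in> \<sigma> ` {..<K}" "v \<in> \<sigma> ` {..<K}" "u \<noteq> v" for u v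
    proof -
      have "(\<lambda>i. rep u v (\<sigma> i)) ` {..<K} \<subseteq> \<sigma> ` {..<K} - {u}"
        using that by (auto simp: rep_def)
      then have "card ((\<lambda>i. rep u v (\<sigma> i)) ` {..<K}) \<le> card (\<sigma> ` {..<K} - {u})"
        by (intro card_mono) auto
      also have "\<dots> < card (\<sigma> ` {..<K})"
        using that by (intro card_Diff1_less) auto
      finally show ?thesis .
    qed
    have bnd: "\<forall>i<K. rep u v (\<sigma> i) < r" if "v \<in> \<sigma> ` {..<K}" for u v
      using that less.prems by (auto simp: rep_def)
    define f1 where "f1 = (\<lambda>x::nat \<Rightarrow> 'a. med K (\<lambda>i. x (rep a b (\<sigma> i))))"
    define f2 where "f2 = (\<lambda>x::nat \<Rightarrow> 'a. med K (\<lambda>i. x (rep b c (\<sigma> i))))"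
    define f3 where "f3 = (\<lambda>x::nat \<Rightarrow> 'a. med K (\<lambda>i. x (rep c a (\<sigma> i))))"
    have h1: "(r, f1) \<in> clone_gen F" unfolding f1_def
      using less.hyps[OF red[OF inI(1,2) abc(1)] bnd[OF inI(2)]] by simp
    have h2: "(r, f2) \<in> clone_gen F" unfolding f2_def
      using less.hyps[OF red[OF inI(2,3) abc(2)] bnd[OF inI(3)]] by simp
    have h3: "(r, f3) \<in> clone_gen F" unfolding f3_def
      using less.hyps[OF red[OF inI(3,1)] bnd[OF inI(1)]] abc by simp
    define G where "G = (\<lambda>j::nat. if j = 0 then f1 else if j = 1 then f2 else f3)"
    have "\<forall>j<3. (r, G j) \<in> clone_gen F" using h1 h2 h3 by (auto simp: G_def)
    then have hm: "(r, \<lambda>x. med 3 (\<lambda>j. G j x)) \<in> clone_gen F" by (rule m3)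
    have eq: "(\<lambda>x. med 3 (\<lambda>j. G j x)) = (\<lambda>x. med K (\<lambda>i. x (\<sigma> i)))"
    proof (rule ext, rule eq_thr)
      fix x :: "nat \<Rightarrow> 'a" and t
      define P where "P = (\<lambda>j. t \<le> x j)"
      define N0 where "N0 = card {i. i < K \<and> P (\<sigma> i)}"
      define N1 where "N1 = card {i. i < K \<and> P (rep a b (\<sigma> i))}"
      define N2 where "N2 = card {i. i < K \<and> P (rep b c (\<sigma> i))}"
      define N3 where "N3 = card {i. i < K \<and> P (rep c a (\<sigma> i))}"
      have o3: "odd (3::nat)" by simp
      have e0: "t \<le> med K (\<lambda>i. x (\<sigma> i)) \<longleftrightarrow> K < 2 * N0"
        using med_thr[OF oK] by (simp add: N0_def P_def)
      have e1: "t \<le> f1 x \<longleftrightarrow> K < 2 * N1"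
        using med_thr[OF oK] by (simp add: f1_def N1_def P_def)
      have e2: "t \<le> f2 x \<longleftrightarrow> K < 2 * N2"
        using med_thr[OF oK] by (simp add: f2_def N2_def P_def)
      have e3: "t \<le> f3 x \<longleftrightarrow> K < 2 * N3"
        using med_thr[OF oK] by (simp add: f3_def N3_def P_def)
      have e: "t \<le> med 3 (\<lambda>j. G j x) \<longleftrightarrow>
          3 < 2 * ((if K < 2 * N1 then 1 else 0) + (if K < 2 * N2 then 1 else 0) + (if K < 2 * N3 then 1 else (0::nat)))"
        using med_thr[OF o3, of t "\<lambda>j. G j x"] e1 e2 e3
        by (simp add: card3 G_def)
      show "t \<le> med 3 (\<lambda>j. G j x) \<longleftrightarrow> t \<le> med K (\<lambda>i. x (\<sigma> i))"
        unfolding e e0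
      proof (cases "P a"; cases "P b"; cases "P c")
        assume "P a" "P b" "P c"
        then have "N1 = N0" "N2 = N0" "N3 = N0" unfolding N0_def N1_def N2_def N3_def
          by (auto intro!: rep_eq)
        then show "3 < 2 * ((if K < 2 * N1 then 1 else 0) + (if K < 2 * N2 then 1 else 0) + (if K < 2 * N3 then 1 else (0::nat))) \<longleftrightarrow> K < 2 * N0"
          by auto
      next
        assume "P a" "P b" "\<not> P c"
        then have "N1 = N0" "N2 \<le> N0" "N0 \<le> N3" unfolding N0_def N1_def N2_def N3_def
          by (auto intro!: rep_eq rep_le rep_ge)
        then show "3 < 2 * ((if K < 2 * N1 then 1 else 0) + (if K < 2 * N2 then 1 else 0) + (if K < 2 * N3 then 1 else (0::nat))) \<longleftrightarrow> K < 2 * N0"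
          by auto
      next
        assume "P a" "\<not> P b" "P c"
        then have "N1 \<le> N0" "N0 \<le> N2" "N3 = N0" unfolding N0_def N1_def N2_def N3_def
          by (auto intro!: rep_eq rep_le rep_ge)
        then show "3 < 2 * ((if K < 2 * N1 then 1 else 0) + (if K < 2 * N2 then 1 else 0) + (if K < 2 * N3 then 1 else (0::nat))) \<longleftrightarrow> K < 2 * N0"
          by auto
      next
        assume "P a" "\<not> P b" "\<not> P c"
        then have "N1 \<le> N0" "N2 = N0" "N0 \<le> N3" unfolding N0_def N1_def N2_def N3_def
          by (auto intro!: rep_eq rep_le rep_ge)
        then show "3 < 2 * ((if K < 2 * N1 then 1 else 0) + (if K < 2 * N2 then 1 else 0) + (if K < 2 * N3 then 1 else (0::nat))) \<longleftrightarrow> K < 2 * N0"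
          by auto
      next
        assume "\<not> P a" "P b" "P c"
        then have "N0 \<le> N1" "N2 = N0" "N3 \<le> N0" unfolding N0_def N1_def N2_def N3_def
          by (auto intro!: rep_eq rep_le rep_ge)
        then show "3 < 2 * ((if K < 2 * N1 then 1 else 0) + (if K < 2 * N2 then 1 else 0) + (if K < 2 * N3 then 1 else (0::nat))) \<longleftrightarrow> K < 2 * N0"
          by auto
      next
        assume "\<not> P a" "P b" "\<not> P c"
        then have "N0 \<le> N1" "N2 \<le> N0" "N3 = N0" unfolding N0_def N1_def N2_def N3_def
          by (auto intro!: rep_eq rep_le rep_ge)
        then show "3 < 2 * ((if K < 2 * N1 then 1 else 0) + (if K < 2 * N2 then 1 else 0) + (if K < 2 * N3 then 1 else (0::nat))) \<longleftrightarrow> K < 2 * N0"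
          by auto
      next
        assume "\<not> P a" "\<not> P b" "P c"
        then have "N1 = N0" "N0 \<le> N2" "N3 \<le> N0" unfolding N0_def N1_def N2_def N3_def
          by (auto intro!: rep_eq rep_le rep_ge)
        then show "3 < 2 * ((if K < 2 * N1 then 1 else 0) + (if K < 2 * N2 then 1 else 0) + (if K < 2 * N3 then 1 else (0::nat))) \<longleftrightarrow> K < 2 * N0"
          by auto
      next
        assume "\<not> P a" "\<not> P b" "\<not> P c"
        then have "N1 = N0" "N2 = N0" "N3 = N0" unfolding N0_def N1_def N2_def N3_def
          by (auto intro!: rep_eq)
        then show "3 < 2 * ((if K < 2 * N1 then 1 else 0) + (if K < 2 * N2 then 1 else 0) + (if K < 2 * N3 then 1 else (0::nat))) \<longleftrightarrow> K < 2 * N0"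
          by auto
      qed
    qed
    show ?thesis using hm eq by simp
  next
    case False
    define v where "v = \<sigma> 0"
    have "\<exists>w. w < r \<and> K < 2 * card {i. i < K \<and> \<sigma> i = w}"
    proof (cases "\<forall>i<K. \<sigma> i = v")
      case True
      then have "{i. i < K \<and> \<sigma> i = v} = {..<K}" by auto
      then show ?thesis using K0 less.prems by (intro exI[of _ v]) (auto simp: v_def)
    next
      case nb: False
      then obtain i0 where i0: "i0 < K" "\<sigma> i0 \<noteq> v" by auto
      define w where "w = \<sigma> i0"
      have all: "\<forall>i<K. \<sigma> i = v \<or> \<sigma> i = w"
        using False K0 i0 by (auto simp: v_def w_def)
      have "{i. i < K \<and> \<not> \<sigma> i = v} = {i. i < K \<and> \<sigma> i = w}"
        using all i0 by (auto simp: w_def)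
      then have s: "card {i. i < K \<and> \<sigma> i = v} + card {i. i < K \<and> \<sigma> i = w} = K"
        using card_split[of K "\<lambda>i. \<sigma> i = v"] by simp
      have "K < 2 * card {i. i < K \<and> \<sigma> i = v} \<or> K < 2 * card {i. i < K \<and> \<sigma> i = w}"
        using s oK by presburger
      then show ?thesis using less.prems K0 i0 by (auto simp: v_def w_def)
    qed
    then obtain w where w: "w < r" "K < 2 * card {i. i < K \<and> \<sigma> i = w}" by blast
    have "(\<lambda>x::nat \<Rightarrow> 'a. med K (\<lambda>i. x (\<sigma> i))) = (\<lambda>x. x w)"
      using maj[OF oK w(2)] by auto
    then show ?thesis using clone_gen.proj[OF w(1), of F] by simp
  qed
qed


lemma sel_count:
  fixes a :: nat
  shows "m \<le> 2 * a + 1 \<Longrightarrow> card {i. i < m \<and> Q (if i < a then 0 else if i < 2 * a then 1 else (2::nat))}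
    = (if Q 0 then min m a else 0) + (if Q 1 then min (m - a) a else 0) + (if Q 2 then m - 2 * a else 0)"
proof (induction m)
  case 0
  then show ?case by simp
next
  case (Suc m)
  then show ?case by (simp only: card_Suc_pred) (auto split: if_splits)
qed

lemma med3_in:
  fixes n :: nat
  assumes "odd n" "n \<ge> 3"
  shows "\<And>G r. (\<forall>j::nat<3. (r, G j) \<in> clone_gen {(n, med n :: (nat \<Rightarrow> 'a::linorder) \<Rightarrow> 'a)})
     \<Longrightarrow> (r, \<lambda>x. med 3 (\<lambda>j. G j x)) \<in> clone_gen {(n, med n :: (nat \<Rightarrow> 'a::linorder) \<Rightarrow> 'a)}"
proof -
  fix G :: "nat \<Rightarrow> (nat \<Rightarrow> 'a) \<Rightarrow> 'a" and r :: nat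
  assume hG: "\<forall>j::nat<3. (r, G j) \<in> clone_gen {(n, med n :: (nat \<Rightarrow> 'a::linorder) \<Rightarrow> 'a)}"
  obtain a where a: "n = 2 * a + 1" using assms(1) oddE by blast
  have a1: "a \<ge> 1" using a assms(2) by simp
  define sel where "sel = (\<lambda>i::nat. if i < a then 0 else if i < 2 * a then 1 else (2::nat))"
  have b: "(n, med n :: (nat \<Rightarrow> 'a::linorder) \<Rightarrow> 'a) \<in> clone_gen {(n, med n)}"
    by (rule clone_gen.base) simp
  have "\<forall>j<n. (r, G (sel j)) \<in> clone_gen {(n, med n :: (nat \<Rightarrow> 'a::linorder) \<Rightarrow> 'a)}"
    using hG by (auto simp: sel_def)
  from clone_gen.comp[OF b this]
  have h: "(r, \<lambda>x. med n (\<lambda>j. G (sel j) x)) \<in> clone_gen {(n, med n :: (nat \<Rightarrow> 'a::linorder) \<Rightarrow> 'a)}" .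
  have eq: "(\<lambda>x. med n (\<lambda>j. G (sel j) x)) = (\<lambda>x. med 3 (\<lambda>j. G j x))"
  proof (rule ext, rule eq_thr)
    fix x t
    define Q where "Q = (\<lambda>j. t \<le> G j x)"
    have c: "card {i. i < n \<and> Q (sel i)} = (if Q 0 then a else 0) + (if Q 1 then a else 0) + (if Q 2 then 1 else 0)"
      using sel_count[of n a Q] a by (simp add: sel_def)
    have o3: "odd (3::nat)" by simp
    have e1: "t \<le> med n (\<lambda>j. G (sel j) x) \<longleftrightarrow> n < 2 * ((if Q 0 then a else 0) + (if Q 1 then a else 0) + (if Q 2 then 1 else 0))"
      using med_thr[OF assms(1), of t "\<lambda>j. G (sel j) x"] c by (simp add: Q_def)
    have e2: "t \<le> med 3 (\<lambda>j. G j x) \<longleftrightarrow> 3 < 2 * ((if Q 0 then 1 else 0) + (if Q 1 then 1 else 0) + (if Q 2 then 1 else (0::nat)))"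
      using med_thr[OF o3, of t "\<lambda>j. G j x"] card3[of Q] by (simp add: Q_def)
    show "t \<le> med n (\<lambda>j. G (sel j) x) \<longleftrightarrow> t \<le> med 3 (\<lambda>j. G j x)"
      unfolding e1 e2 using a a1 by (cases "Q 0"; cases "Q 1"; cases "Q 2") auto
  qed
  show "(r, \<lambda>x. med 3 (\<lambda>j. G j x)) \<in> clone_gen {(n, med n :: (nat \<Rightarrow> 'a::linorder) \<Rightarrow> 'a)}"
    using h eq by simp
qed

theorem mainTheorem1:
  fixes k n :: nat
  assumes "odd k" "k \<ge> 3" "odd n" "n \<ge> 3"
  shows "\<exists>g. (k, g) \<in> clone_gen {(n, med n :: (nat \<Rightarrow> 'a::linorder) \<Rightarrow> 'a)}
              \<and> (\<forall>x. g x = med k x)"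
proof -
  have "(k, \<lambda>x. med k (\<lambda>i. x i)) \<in> clone_gen {(n, med n :: (nat \<Rightarrow> 'a::linorder) \<Rightarrow> 'a)}"
    using main_lemma[OF assms(1) med3_in[OF assms(3,4)], of "\<lambda>i. i" k] by simp
  then show ?thesis by (intro exI[of _ "\<lambda>x. med k (\<lambda>i. x i)"]) simp
qed

end
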